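(* Let $a,b$ be coprime integers with $|a|\ge b\ge 2$, and let $\mathcal{D}=\{0,1,\ldots,|a|-1\}$. Let $x\in\mathbb{R}$, and if $\tfrac{a}{b}>0$ assume $x>0$. Let $k\in\mathbb{Z}$ and $(d_j)_{j\le k}$ be a sequence in $\mathcal{D}$ with $d_k\neq 0$ such that the series $\sum_{j\le k} d_j\left(\tfrac{a}{b}\right)^j$ converges to $x$ in $\mathbb{C}$. Then this series is an $\tfrac{a}{b}$-expansion of $x$ if and only if it converges to $0$ in $\mathbb{Q}_p$ for every prime $p$ dividing $b$.
   Context: An $\tfrac{a}{b}$-expansion of $x$ is an expression $x=\sum_{j\le k} d_j\left(\tfrac{a}{b}\right)^j$ with $d_j\in\mathcal{D}$ and $d_k\neq 0$ such that for every integer $l\le k$ the number $N_l:=\sum_{j=l}^{k} d_j\left(\tfrac{a}{b}\right)^{j-l}$ lies in $b\mathbb{Z}$ (equivalently, $d_k\ldots d_l$ is the integer $\tfrac ab$-expansion of an element of $b\mathbb{Z}$, obtained by repeatedly applying the map $b\mathbb{Z}\to b\mathbb{Z}$, $N\mapsto \tfrac{b}{a}(N-d)$ with $d\in\mathcal{D}$ the unique digit making the result lie in $b\mathbb{Z}$, until reaching $0$). $\mathbb{Q}_p$ denotes the field of $p$-adic numbers. *)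

theory Defs
  imports Complex_Main "HOL-Computational_Algebra.Primes"
begin

definition digits :: "int \<Rightarrow> int set" where
  "digits a = {0..\<bar>a\<bar> - 1}"

definition partial_sum :: "int \<Rightarrow> int \<Rightarrow> int \<Rightarrow> (int \<Rightarrow> int) \<Rightarrow> nat \<Rightarrow> 'f::field" where
  "partial_sum a b k d n =
     (\<Sum>j\<in>{k - int n..k}. of_int (d j) * (of_int a / of_int b) powi j)"

definition ab_expansion :: "int \<Rightarrow> int \<Rightarrow> int \<Rightarrow> (int \<Rightarrow> int) \<Rightarrow> bool" where
  "ab_expansion a b k d \<longleftrightarrow>
     (\<forall>l\<le>k. \<exists>z::int.
        (\<Sum>j\<in>{l..k}. of_int (d j) * (of_int a / of_int b :: rat) ^ nat (j - l)) = of_int (b * z))"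

definition padic_val_rat :: "int \<Rightarrow> rat \<Rightarrow> int" where
  "padic_val_rat p q = (case quotient_of q of (n, m) \<Rightarrow>
      int (multiplicity p n) - int (multiplicity p m))"

definition padic_abs :: "int \<Rightarrow> rat \<Rightarrow> real" where
  "padic_abs p q = (if q = 0 then 0 else real_of_int p powr (- real_of_int (padic_val_rat p q)))"

text \<open>A series of rationals with partial sums S converges to 0 in Q_p iff |S n|_p \<rightarrow> 0.\<close>
definition padic_tendsto_zero :: "int \<Rightarrow> (nat \<Rightarrow> rat) \<Rightarrow> bool" where
  "padic_tendsto_zero p S \<longleftrightarrow> (\<lambda>n. padic_abs p (S n)) \<longlonglongrightarrow> 0"

end

theory Submission imports Defs begin

definition Mf :: "int \<Rightarrow> int \<Rightarrow> int \<Rightarrow> (int \<Rightarrow> int) \<Rightarrow> int \<Rightarrow> int" where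
  "Mf a b k d l = (\<Sum>j\<in>{l..k}. d j * a ^ nat (j - l) * b ^ nat (k - j))"

lemma N_eq:
  assumes "b \<noteq> 0"
  shows "(\<Sum>j\<in>{l..k}. of_int (d j) * (of_int a / of_int b :: rat) ^ nat (j - l))
     = of_int (Mf a b k d l) / of_int b ^ nat (k - l)"
proof -
  have "(\<Sum>j\<in>{l..k}. of_int (d j) * (of_int a / of_int b :: rat) ^ nat (j - l))
     = (\<Sum>j\<in>{l..k}. of_int (d j * a ^ nat (j - l) * b ^ nat (k - j)) / of_int b ^ nat (k - l))"
  proof (rule sum.cong)
    fix j assume j: "j \<in> {l..k}"
    have "nat (k - l) = nat (k - j) + nat (j - l)" using j by auto
    hence "(of_int b :: rat) ^ nat (k - l) = of_int b ^ nat (k - j) * of_int b ^ nat (j - l)"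
      by (simp add: power_add)
    thus "of_int (d j) * (of_int a / of_int b :: rat) ^ nat (j - l) =
        of_int (d j * a ^ nat (j - l) * b ^ nat (k - j)) / of_int b ^ nat (k - l)"
      using assms by (simp add: power_divide field_simps)
  qed simp
  also have "\<dots> = of_int (Mf a b k d l) / of_int b ^ nat (k - l)"
    unfolding Mf_def by (simp add: sum_divide_distrib)
  finally show ?thesis .
qed

lemma exp_iff:
  assumes "b \<noteq> 0"
  shows "ab_expansion a b k d \<longleftrightarrow> (\<forall>l\<le>k. b ^ (nat (k - l) + 1) dvd Mf a b k d l)"
proof -
  have "(\<exists>z. (of_int (Mf a b k d l) / of_int b ^ nat (k - l) :: rat) = of_int (b * z))
     \<longleftrightarrow> b ^ (nat (k - l) + 1) dvd Mf a b k d l" for l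
  proof -
    have "(of_int (Mf a b k d l) / of_int b ^ nat (k - l) :: rat) = of_int (b * z)
        \<longleftrightarrow> Mf a b k d l = b ^ (nat (k - l) + 1) * z" for z
    proof -
      have "(of_int (Mf a b k d l) / of_int b ^ nat (k - l) :: rat) = of_int (b * z)
         \<longleftrightarrow> (of_int (Mf a b k d l) :: rat) = of_int (b ^ (nat (k - l) + 1) * z)"
        using assms by (simp add: field_simps)
      also have "\<dots> \<longleftrightarrow> Mf a b k d l = b ^ (nat (k - l) + 1) * z" by (rule of_int_eq_iff)
      finally show ?thesis .
    qed
    thus ?thesis by (auto simp: dvd_def)
  qed
  thus ?thesis unfolding ab_expansion_def N_eq[OF assms] by simp
qed

lemma psum_eq:
  assumes "b \<noteq> 0" "a \<noteq> 0"
  shows "(partial_sum a b k d n :: rat) = (of_int a / of_int b) powi (k - int n) *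
     (of_int (Mf a b k d (k - int n)) / of_int b ^ nat (k - (k - int n)))"
proof -
  let ?l = "k - int n" and ?r = "(of_int a / of_int b :: rat)"
  have "partial_sum a b k d n = (\<Sum>j\<in>{?l..k}. ?r powi ?l * (of_int (d j) * ?r ^ nat (j - ?l)))"
    unfolding partial_sum_def
  proof (rule sum.cong)
    fix j assume j: "j \<in> {?l..k}"
    have pa: "?r powi (?l + int m) = ?r powi ?l * ?r ^ m" for m
      using assms by (simp add: power_int_add)
    have "?r powi j = ?r powi (?l + int (nat (j - ?l)))" using j by simp
    also have "\<dots> = ?r powi ?l * ?r ^ nat (j - ?l)" by (rule pa)
    finally show "of_int (d j) * ?r powi j = ?r powi ?l * (of_int (d j) * ?r ^ nat (j - ?l))" by simp
  qed simp
  also have "\<dots> = ?r powi ?l * (\<Sum>j\<in>{?l..k}. of_int (d j) * ?r ^ nat (j - ?l))"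
    by (simp add: sum_distrib_left)
  finally show ?thesis using N_eq[OF assms(1)] by simp
qed

lemma val_div:
  fixes p X Y :: int
  assumes "prime p" "X \<noteq> 0" "Y \<noteq> 0"
  shows "padic_val_rat p (of_int X / of_int Y) = int (multiplicity p X) - int (multiplicity p Y)"
proof -
  obtain n m where q: "quotient_of (of_int X / of_int Y) = (n, m)" by (cases "quotient_of (of_int X / of_int Y)")
  have m: "m > 0" using quotient_of_denom_pos[OF q] .
  have e: "(of_int X / of_int Y :: rat) = of_int n / of_int m" using quotient_of_div[OF q] .
  hence "(of_int X * of_int m :: rat) = of_int n * of_int Y" using m assms by (simp add: field_simps)
  hence eq: "X * m = n * Y" by (metis of_int_eq_iff of_int_mult)
  have n: "n \<noteq> 0" using eq assms m by auto
  have "multiplicity p (X * m) = multiplicity p (n * Y)" using eq by simp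
  hence "multiplicity p X + multiplicity p m = multiplicity p n + multiplicity p Y"
    using assms m n by (metis prime_imp_prime_elem prime_elem_multiplicity_mult_distrib less_irrefl)
  thus ?thesis unfolding padic_val_rat_def q by simp
qed

lemma powi_frac:
  assumes "a \<noteq> 0" "b \<noteq> 0"
  shows "(of_int a / of_int b :: rat) powi l = of_int (a ^ nat l * b ^ nat (-l)) / of_int (b ^ nat l * a ^ nat (-l))"
proof (cases "l \<ge> 0")
  case True
  then obtain m where "l = int m" by (metis nonneg_eq_int)
  thus ?thesis by (simp add: power_int_of_nat power_divide)
next
  case False
  then obtain m where "l = - int m" by (metis neg_int_cases linorder_not_le less_imp_le nonpos_int_cases)
  thus ?thesis using assms by (simp add: power_int_minus power_int_of_nat power_divide)
qed

lemma S_val: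
  fixes p a b M :: int
  assumes "prime p" "p dvd b" "coprime a b" "a \<noteq> 0" "b \<noteq> 0" "l \<le> k" "M \<noteq> 0"
  shows "padic_val_rat p ((of_int a / of_int b) powi l * (of_int M / of_int b ^ nat (k - l)))
     = int (multiplicity p M) - k * int (multiplicity p b)"
proof -
  have pa: "\<not> p dvd a" using assms
    by (meson coprime_common_divisor not_prime_unit)
  have ma: "multiplicity p a = 0" using pa by (rule not_dvd_imp_multiplicity_0)
  have pe: "prime_elem p" using assms(1) by (rule prime_imp_prime_elem)
  have "(of_int a / of_int b :: rat) powi l * (of_int M / of_int b ^ nat (k - l))
     = of_int (a ^ nat l * b ^ nat (-l) * M) / of_int (b ^ nat l * a ^ nat (-l) * b ^ nat (k - l))"
    unfolding powi_frac[OF assms(4,5)] by simp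
  also have "padic_val_rat p \<dots> = int (multiplicity p (a ^ nat l * b ^ nat (-l) * M))
      - int (multiplicity p (b ^ nat l * a ^ nat (-l) * b ^ nat (k - l)))"
    using assms by (intro val_div) auto
  also have "\<dots> = int (nat (-l) * multiplicity p b + multiplicity p M)
      - int (nat l * multiplicity p b + nat (k - l) * multiplicity p b)"
    using assms pe ma
    by (simp add: prime_elem_multiplicity_mult_distrib prime_elem_multiplicity_power_distrib)
  also have "\<dots> = int (multiplicity p M) - k * int (multiplicity p b)"
    using assms(6) by (cases "l \<ge> 0") (simp_all add: algebra_simps)
  finally show ?thesis .
qed

lemma M_rec:
  assumes "l \<le> k"
  shows "Mf a b k d (l - 1) = d (l - 1) * b ^ nat (k - l + 1) + a * Mf a b k d l"
proof -
  have s: "{l - 1..k} = insert (l - 1) {l..k}" using assms by auto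
  have "Mf a b k d (l - 1) = d (l - 1) * b ^ nat (k - l + 1)
      + (\<Sum>j\<in>{l..k}. d j * a ^ nat (j - (l - 1)) * b ^ nat (k - j))"
    unfolding Mf_def s by (simp add: algebra_simps)
  also have "(\<Sum>j\<in>{l..k}. d j * a ^ nat (j - (l - 1)) * b ^ nat (k - j))
      = (\<Sum>j\<in>{l..k}. a * (d j * a ^ nat (j - l) * b ^ nat (k - j)))"
  proof (rule sum.cong)
    fix j assume "j \<in> {l..k}"
    hence "nat (j - (l - 1)) = Suc (nat (j - l))" by auto
    thus "d j * a ^ nat (j - (l - 1)) * b ^ nat (k - j) = a * (d j * a ^ nat (j - l) * b ^ nat (k - j))"
      by simp
  qed simp
  finally show ?thesis unfolding Mf_def by (simp add: sum_distrib_left)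
qed

lemma abs_bound:
  fixes p :: int and c :: real
  assumes "p \<ge> 2"
  shows "(\<lambda>n. real_of_int p powr (c - real n)) \<longlonglongrightarrow> 0"
proof -
  have "(\<lambda>n. real_of_int p powr c * inverse (real_of_int p ^ n)) \<longlonglongrightarrow> 0"
    using assms by (intro tendsto_mult_right_zero LIMSEQ_inverse_realpow_zero) simp
  moreover have "real_of_int p powr (c - real n) = real_of_int p powr c * inverse (real_of_int p ^ n)" for n
    using assms by (simp add: powr_diff powr_realpow divide_inverse)
  ultimately show ?thesis by simp
qed

theorem mainTheorem2:
  fixes a b k :: int and x :: real and d :: "int \<Rightarrow> int"
  assumes "coprime a b" and "\<bar>a\<bar> \<ge> b" and "b \<ge> 2"
    and "real_of_int a / real_of_int b > 0 \<Longrightarrow> x > 0"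
    and "\<And>j. j \<le> k \<Longrightarrow> d j \<in> digits a"
    and "d k \<noteq> 0"
    and "(\<lambda>n. partial_sum a b k d n :: real) \<longlonglongrightarrow> x"
  shows "ab_expansion a b k d \<longleftrightarrow>
           (\<forall>p::int. prime p \<and> p dvd b \<longrightarrow>
              padic_tendsto_zero p (\<lambda>n. partial_sum a b k d n :: rat))"
proof -
  have b0: "b \<noteq> 0" and a0: "a \<noteq> 0" using assms(2,3) by auto
  define M where "M = Mf a b k d"
  have S: "(partial_sum a b k d n :: rat) = (of_int a / of_int b) powi (k - int n) *
     (of_int (M (k - int n)) / of_int b ^ nat (k - (k - int n)))" for n
    unfolding M_def by (rule psum_eq[OF b0 a0])
  show ?thesis
  proof
    assume ex: "ab_expansion a b k d"
    hence dv: "\<And>l. l \<le> k \<Longrightarrow> b ^ (nat (k - l) + 1) dvd M l" unfolding M_def exp_iff[OF b0] by blast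
    show "\<forall>p::int. prime p \<and> p dvd b \<longrightarrow> padic_tendsto_zero p (\<lambda>n. partial_sum a b k d n :: rat)"
    proof (intro allI impI)
      fix p :: int assume pp: "prime p \<and> p dvd b"
      hence p2: "p \<ge> 2" using prime_ge_2_int by blast
      have nu: "\<not> is_unit p" using pp by auto
      define e where "e = multiplicity p b"
      have bound: "padic_abs p (partial_sum a b k d n) \<le> real_of_int p powr (real_of_int (k * int e - 1) - real n)" for n
      proof (cases "M (k - int n) = 0")
        case True
        thus ?thesis unfolding S padic_abs_def by simp
      next
        case False
        have "p ^ (n + 1) dvd b ^ (n + 1)" using pp by (intro dvd_power_same) auto
        also have "b ^ (n + 1) dvd M (k - int n)" using dv[of "k - int n"] by simp
        finally have "multiplicity p (M (k - int n)) \<ge> n + 1"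
          using False nu by (intro multiplicity_geI) auto
        moreover have "padic_val_rat p (partial_sum a b k d n) = int (multiplicity p (M (k - int n))) - k * int e"
          unfolding S e_def using pp assms(1) a0 b0 False by (intro S_val) auto
        ultimately have "- real_of_int (padic_val_rat p (partial_sum a b k d n)) \<le> real_of_int (k * int e - 1) - real n"
          by simp
        hence "real_of_int p powr (- real_of_int (padic_val_rat p (partial_sum a b k d n))) \<le> real_of_int p powr (real_of_int (k * int e - 1) - real n)"
          using p2 by (intro powr_mono) auto
        thus ?thesis unfolding padic_abs_def by simp
      qed
      show "padic_tendsto_zero p (\<lambda>n. partial_sum a b k d n :: rat)"
        unfolding padic_tendsto_zero_def
      proof (rule tendsto_sandwich[OF _ _ tendsto_const abs_bound[OF p2]])
        show "\<forall>\<^sub>F n in sequentially. 0 \<le> padic_abs p (partial_sum a b k d n)"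
          by (simp add: padic_abs_def)
        show "\<forall>\<^sub>F n in sequentially. padic_abs p (partial_sum a b k d n) \<le> real_of_int p powr (real_of_int (k * int e - 1) - real n)"
          using bound by simp
      qed
    qed
  next
    assume H: "\<forall>p::int. prime p \<and> p dvd b \<longrightarrow> padic_tendsto_zero p (\<lambda>n. partial_sum a b k d n :: rat)"
    show "ab_expansion a b k d"
    proof (rule ccontr)
      assume "\<not> ab_expansion a b k d"
      then obtain l where lk: "l \<le> k" and nd: "\<not> b ^ (nat (k - l) + 1) dvd M l"
        unfolding M_def exp_iff[OF b0] by blast
      obtain p :: int where pp: "prime p" and lt: "\<not> multiplicity p (b ^ (nat (k - l) + 1)) \<le> multiplicity p (M l)"
        using nd multiplicity_le_imp_dvd[of "b ^ (nat (k - l) + 1)" "M l"] b0 by auto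
      define c0 where "c0 = multiplicity p (M l)"
      have pb: "p dvd b"
        using lt not_dvd_imp_multiplicity_0[of p "b ^ (nat (k - l) + 1)"] pp
        by (metis bot_nat_0.extremum prime_dvd_power_int)
      have nu: "\<not> is_unit p" using pp by auto
      have pa: "\<not> p dvd a" using assms(1) pp pb
        by (meson coprime_common_divisor not_prime_unit)
      have cop: "coprime (p ^ n) a" for n using pa pp
        by (simp add: prime_imp_coprime)
      have pbig: "p ^ Suc c0 dvd b ^ (nat (k - l) + 1)"
        using lt unfolding c0_def by (intro multiplicity_dvd') auto
      have inv: "p ^ c0 dvd M (l - int t) \<and> \<not> p ^ Suc c0 dvd M (l - int t)" for t
      proof (induction t)
        case 0
        have Ml: "M l \<noteq> 0" using nd by auto
        have "\<not> p ^ Suc c0 dvd M l"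
        proof
          assume "p ^ Suc c0 dvd M l"
          hence "multiplicity p (M l) \<ge> Suc c0" using Ml nu by (intro multiplicity_geI) auto
          thus False unfolding c0_def by simp
        qed
        thus ?case unfolding c0_def by (simp add: multiplicity_dvd)
      next
        case (Suc t)
        have rec: "M (l - int t - 1) = d (l - int t - 1) * b ^ nat (k - (l - int t) + 1) + a * M (l - int t)"
          unfolding M_def using lk by (intro M_rec) auto
        have eqs: "l - int (Suc t) = l - int t - 1" by simp
        have "b ^ (nat (k - l) + 1) dvd b ^ nat (k - (l - int t) + 1)"
          using lk by (intro le_imp_power_dvd) auto
        hence d1: "p ^ Suc c0 dvd d (l - int t - 1) * b ^ nat (k - (l - int t) + 1)"
          using pbig by (meson dvd_mult dvd_trans)
        hence d1': "p ^ c0 dvd d (l - int t - 1) * b ^ nat (k - (l - int t) + 1)"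
          by (rule dvd_trans[rotated]) (simp add: le_imp_power_dvd)
        have d2: "p ^ c0 dvd a * M (l - int t)" using Suc by simp
        have d3: "\<not> p ^ Suc c0 dvd a * M (l - int t)"
          using Suc cop[of "Suc c0"] by (simp add: coprime_dvd_mult_right_iff)
        show ?case unfolding eqs rec
          using d1 d1' d2 d3 by (metis dvd_add dvd_add_right_iff)
      qed
      define e where "e = multiplicity p b"
      define C where "C = real_of_int p powr (- real_of_int (int c0 - k * int e))"
      have Cpos: "C > 0" unfolding C_def using pp prime_gt_0_int by simp
      have ev: "\<forall>\<^sub>F n in sequentially. padic_abs p (partial_sum a b k d n) = C"
      proof (rule eventually_sequentiallyI[of "nat (k - l)"])
        fix n assume n: "nat (k - l) \<le> n"
        define t where "t = n - nat (k - l)"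
        have kn: "k - int n = l - int t" using n lk unfolding t_def by auto
        have Mt: "M (k - int n) \<noteq> 0" "multiplicity p (M (k - int n)) = c0"
          using inv[of t] unfolding kn by (auto intro: multiplicity_eqI)
        have Snz: "(partial_sum a b k d n :: rat) \<noteq> 0"
          unfolding S using Mt a0 b0 by simp
        have "padic_val_rat p (partial_sum a b k d n) = int c0 - k * int e"
          unfolding S e_def using pp pb assms(1) a0 b0 Mt n by (subst S_val) auto
        thus "padic_abs p (partial_sum a b k d n) = C"
          unfolding padic_abs_def C_def using Snz by simp
      qed
      have "padic_tendsto_zero p (\<lambda>n. partial_sum a b k d n :: rat)" using H pp pb by blast
      hence "(\<lambda>n. padic_abs p (partial_sum a b k d n)) \<longlonglongrightarrow> 0" unfolding padic_tendsto_zero_def .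
      hence "(\<lambda>n. C) \<longlonglongrightarrow> 0" by (rule Lim_transform_eventually[OF _ ev])
      hence "C = 0" by (simp add: LIMSEQ_const_iff)
      thus False using Cpos by simp
    qed
  qed
qed

end
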